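(* Let $a$ and $b$ be relatively prime integers with $1<a<b$, let $(u,v)$ be the definitely least solution of the Diophantine equation $ax+by=1$, and let $S=\langle a,b\rangle=\{\lambda_1a+\lambda_2b:\lambda_1,\lambda_2\in\mathbb{N}\}$. Then the number of isolated gaps of $S$ is $\#I(S)=|uv|$.
   Context: $\mathbb{N}$ denotes the set of nonnegative integers. A gap of a numerical semigroup $S\subseteq\mathbb{N}$ is an element of $\mathbb{N}\setminus S$. An isolated gap of $S$ is a gap $x$ of $S$ such that $x-1\in S$ and $x+1\in S$; $I(S)$ denotes the set of isolated gaps of $S$. For relatively prime positive integers $a,b$, a solution $(u,v)\in\mathbb{Z}^2$ of $ax+by=1$ is the definitely least solution if both $|u|$ and $|v|$ attain their least possible values among all integer solutions; such a solution exists and is unique, and a solution $(x_0,y_0)$ is the definitely least solution if and only if $|x_0|\le b/2$ and $|y_0|\le a/2$. *)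

theory Defs
  imports Main
begin

definition gen2 :: "nat \<Rightarrow> nat \<Rightarrow> nat set" where
  "gen2 a b = {l1 * a + l2 * b | l1 l2. True}"

definition gaps :: "nat set \<Rightarrow> nat set" where
  "gaps S = UNIV - S"

definition isolated_gaps :: "nat set \<Rightarrow> nat set" where
  "isolated_gaps S = {x \<in> gaps S. x \<ge> 1 \<and> x - 1 \<in> S \<and> x + 1 \<in> S}"

definition definitely_least_solution :: "int \<Rightarrow> int \<Rightarrow> int \<Rightarrow> int \<Rightarrow> bool" where
  "definitely_least_solution a b u v \<longleftrightarrow>
     a * u + b * v = 1 \<and>
     (\<forall>x y. a * x + b * y = 1 \<longrightarrow> \<bar>u\<bar> \<le> \<bar>x\<bar> \<and> \<bar>v\<bar> \<le> \<bar>y\<bar>)"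

end

theory Submission
  imports Defs
begin

lemma memS:
  assumes "0 \<le> l1" "0 \<le> l2" "int n = l1 * int a + l2 * int b"
  shows "n \<in> gen2 a b"
proof -
  have "n = nat l1 * a + nat l2 * b"
    using assms by (metis int_eq_iff nat_int nat_mult_distrib nat_add_distrib of_nat_0_le_iff
       mult_nonneg_nonneg nat_int nat_eq_iff2)
  thus ?thesis unfolding gen2_def by blast
qed

lemma notS:
  assumes cp: "coprime a b" and "0 \<le> \<alpha>" "\<alpha> < int b" "\<beta> < 0"
    and n: "int n = \<alpha> * int a + \<beta> * int b" and b: "b > 0" and a: "a > 0"
  shows "n \<notin> gen2 a b"
proof
  assume "n \<in> gen2 a b"
  then obtain l1 l2 where l: "n = l1 * a + l2 * b" unfolding gen2_def by blast
  hence e: "(\<alpha> - int l1) * int a = (int l2 - \<beta>) * int b"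
    using n by (simp add: algebra_simps)
  have "int b dvd (\<alpha> - int l1) * int a" using e by simp
  moreover have "coprime (int b) (int a)" using cp by (simp add: coprime_commute)
  ultimately have d: "int b dvd (\<alpha> - int l1)" using coprime_dvd_mult_left_iff by blast
  have "(int l2 - \<beta>) * int b > 0" using assms by simp
  hence "(\<alpha> - int l1) * int a > 0" using e by simp
  hence "\<alpha> - int l1 > 0" using a by (simp add: zero_less_mult_iff)
  hence "int b \<le> \<alpha> - int l1" using d zdvd_imp_le by blast
  thus False using assms by simp
qed

lemma memS_iff:
  assumes cp: "coprime a b" and "0 \<le> \<alpha>" "\<alpha> < int b"
    and n: "int n = \<alpha> * int a + \<beta> * int b" and b: "b > 0" and a: "a > 0"
  shows "n \<in> gen2 a b \<longleftrightarrow> 0 \<le> \<beta>"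
  using notS[OF cp assms(2,3) _ n b a] memS[OF assms(2) _ n] by force

lemma rep:
  assumes "int a * u + int b * v = 1" "b > 0"
  shows "\<exists>\<alpha> \<beta>. 0 \<le> \<alpha> \<and> \<alpha> < int b \<and> n = \<alpha> * int a + \<beta> * int b"
proof -
  have e1: "n = (n*u) * int a + (n*v) * int b" using assms
    by (metis mult.commute mult.left_commute distrib_left mult.right_neutral)
  have e2: "n*u = (n*u) mod int b + ((n*u) div int b) * int b" by simp
  have "n = ((n*u) mod int b) * int a + ((n*u) div int b * int a + n*v) * int b"
  proof -
    define r where "r = (n*u) mod int b"
    define q where "q = (n*u) div int b"
    have "n = (r + q * int b) * int a + (n*v) * int b" using e1 e2 unfolding r_def q_def by simp
    thus ?thesis unfolding r_def[symmetric] q_def[symmetric] by (simp add: algebra_simps)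
  qed
  moreover have "0 \<le> (n*u) mod int b" "(n*u) mod int b < int b" using assms by auto
  ultimately show ?thesis by blast
qed


theorem theorem3p4:
  fixes a b :: nat and u v :: int
  assumes "coprime a b" and "1 < a" and "a < b"
    and "definitely_least_solution (int a) (int b) u v"
  shows "card (isolated_gaps (gen2 a b)) = nat \<bar>u * v\<bar>"
proof -
  note cp = assms(1)
  have a0: "a > 0" and b0: "b > 0" using assms by auto
  have sol: "int a * u + int b * v = 1"
    and mn: "\<And>x y. int a * x + int b * y = 1 \<Longrightarrow> \<bar>u\<bar> \<le> \<bar>x\<bar> \<and> \<bar>v\<bar> \<le> \<bar>y\<bar>"
    using assms(4) unfolding definitely_least_solution_def by auto
  have m1: "\<bar>u\<bar> \<le> \<bar>u - int b\<bar> \<and> \<bar>v\<bar> \<le> \<bar>v + int a\<bar>"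
    using mn[of "u - int b" "v + int a"] sol by (simp add: algebra_simps)
  have m2: "\<bar>u\<bar> \<le> \<bar>u + int b\<bar> \<and> \<bar>v\<bar> \<le> \<bar>v - int a\<bar>"
    using mn[of "u + int b" "v - int a"] sol by (simp add: algebra_simps)
  have ub: "2 * \<bar>u\<bar> \<le> int b" using m1 m2 b0 by (simp add: abs_if split: if_splits)
  have vb: "2 * \<bar>v\<bar> \<le> int a" using m1 m2 a0 by (simp add: abs_if split: if_splits)
  have signs: "(u > 0 \<and> v < 0) \<or> (u < 0 \<and> v > 0)"
  proof -
    have "\<not> (u \<ge> 0 \<and> v \<ge> 0)"
    proof
      assume h: "u \<ge> 0 \<and> v \<ge> 0"
      show False
      proof (cases "u = 0")
        case True
        then have "int b * v = 1" using sol by simp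
        then have "int b dvd 1" by (metis dvd_triv_left)
        thus False using assms(2,3) by simp
      next
        case False
        hence "u \<ge> 1" using h by simp
        hence "int a * 1 \<le> int a * u" by (intro mult_left_mono) auto
        hence "int a * u \<ge> int a" by simp
        moreover have "int b * v \<ge> 0" using h by simp
        ultimately show False using sol assms(2) by linarith
      qed
    qed
    moreover have "\<not> (u \<le> 0 \<and> v \<le> 0)"
    proof
      assume h: "u \<le> 0 \<and> v \<le> 0"
      have "int a * u \<le> 0" using h by (simp add: mult_nonneg_nonpos)
      moreover have "int b * v \<le> 0" using h by (simp add: mult_nonneg_nonpos)
      ultimately show False using sol by linarith
    qed
    moreover have "v \<noteq> 0"
    proof
      assume "v = 0"
      then have "int a * u = 1" using sol by simp
      then have "int a dvd 1" by (metis dvd_triv_left)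
      thus False using assms(2) by simp
    qed
    ultimately show ?thesis by linarith
  qed
  define Box where "Box = {int b - \<bar>u\<bar>..<int b} \<times> {- \<bar>v\<bar>..<0}"
  define f where "f = (\<lambda>(\<alpha>::int, \<beta>::int). nat (\<alpha> * int a + \<beta> * int b))"
  have isoI: "x \<in> isolated_gaps (gen2 a b)"
    if "x \<notin> gen2 a b" "x \<ge> 1" "x - 1 \<in> gen2 a b" "x + 1 \<in> gen2 a b" for x
    using that unfolding isolated_gaps_def gaps_def by auto
  have K: "\<alpha> * int a + \<beta> * int b \<ge> 1 \<and> nat (\<alpha> * int a + \<beta> * int b) \<in> isolated_gaps (gen2 a b)"
    if p: "(\<alpha>, \<beta>) \<in> Box" for \<alpha> \<beta>
  proof -
    define x where "x = \<alpha> * int a + \<beta> * int b"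
    from signs show ?thesis
    proof
      assume s: "u > 0 \<and> v < 0"
      hence bx: "int b - u \<le> \<alpha>" "\<alpha> < int b" "v \<le> \<beta>" "\<beta> < 0" using p unfolding Box_def by auto
      have e1: "x - 1 = (\<alpha> - u) * int a + (\<beta> - v) * int b" using sol unfolding x_def by (simp add: algebra_simps)
      have e2: "x + 1 = (\<alpha> + u - int b) * int a + (\<beta> + v + int a) * int b" using sol unfolding x_def by (simp add: algebra_simps)
      have c1: "\<alpha> - u \<ge> 0" "\<beta> - v \<ge> 0" "\<alpha> + u - int b \<ge> 0" "\<beta> + v + int a \<ge> 0"
        using bx ub vb s by auto
      have "x - 1 \<ge> 0" using e1 c1 by simp
      hence x1: "x \<ge> 1" by simp
      have "nat x \<notin> gen2 a b" using notS[OF cp _ bx(2) bx(4) _ b0 a0, of "nat x"] bx ub s x1 unfolding x_def by auto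
      moreover have "nat x - 1 \<in> gen2 a b" using memS[OF c1(1,2), of "nat x - 1"] e1 x1 by simp
      moreover have "nat x + 1 \<in> gen2 a b" using memS[OF c1(3,4), of "nat x + 1"] e2 x1 by simp
      ultimately show ?thesis using isoI[of "nat x"] x1 unfolding x_def by auto
    next
      assume s: "u < 0 \<and> v > 0"
      hence bx: "int b + u \<le> \<alpha>" "\<alpha> < int b" "- v \<le> \<beta>" "\<beta> < 0" using p unfolding Box_def by auto
      have e1: "x - 1 = (\<alpha> - u - int b) * int a + (\<beta> - v + int a) * int b" using sol unfolding x_def by (simp add: algebra_simps)
      have e2: "x + 1 = (\<alpha> + u) * int a + (\<beta> + v) * int b" using sol unfolding x_def by (simp add: algebra_simps)
      have c1: "\<alpha> - u - int b \<ge> 0" "\<beta> - v + int a \<ge> 0" "\<alpha> + u \<ge> 0" "\<beta> + v \<ge> 0"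
        using bx ub vb s by auto
      have "x - 1 \<ge> 0" using e1 c1 by simp
      hence x1: "x \<ge> 1" by simp
      have "nat x \<notin> gen2 a b" using notS[OF cp _ bx(2) bx(4) _ b0 a0, of "nat x"] bx ub s x1 unfolding x_def by auto
      moreover have "nat x - 1 \<in> gen2 a b" using memS[OF c1(1,2), of "nat x - 1"] e1 x1 by simp
      moreover have "nat x + 1 \<in> gen2 a b" using memS[OF c1(3,4), of "nat x + 1"] e2 x1 by simp
      ultimately show ?thesis using isoI[of "nat x"] x1 unfolding x_def by auto
    qed
  qed
  have inj: "inj_on f Box"
  proof (rule inj_onI)
    fix p q assume p: "p \<in> Box" and q: "q \<in> Box" and e: "f p = f q"
    obtain \<alpha> \<beta> where pp: "p = (\<alpha>, \<beta>)" by fastforce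
    obtain \<alpha>' \<beta>' where qq: "q = (\<alpha>', \<beta>')" by fastforce
    have r: "0 \<le> \<alpha>" "\<alpha> < int b" "0 \<le> \<alpha>'" "\<alpha>' < int b" "\<beta> \<ge> - \<bar>v\<bar>" "\<beta>' \<ge> - \<bar>v\<bar>"
      using p q ub unfolding pp qq Box_def by auto
    have nn: "\<alpha> * int a + \<beta> * int b \<ge> 0" "\<alpha>' * int a + \<beta>' * int b \<ge> 0"
      using K p q unfolding pp qq by force+
    have e2: "\<alpha> * int a + \<beta> * int b = \<alpha>' * int a + \<beta>' * int b"
      using e nn unfolding f_def pp qq by simp
    hence e3: "(\<alpha> - \<alpha>') * int a = (\<beta>' - \<beta>) * int b" by (simp add: algebra_simps)
    have "int b dvd (\<alpha> - \<alpha>') * int a" using e3 by simp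
    moreover have "coprime (int b) (int a)" using cp by (simp add: coprime_commute)
    ultimately have d: "int b dvd (\<alpha> - \<alpha>')" using coprime_dvd_mult_left_iff by blast
    have "\<alpha> = \<alpha>'"
    proof (rule ccontr)
      assume "\<alpha> \<noteq> \<alpha>'"
      hence "\<alpha> - \<alpha>' > 0 \<or> \<alpha>' - \<alpha> > 0" by linarith
      moreover have "int b dvd (\<alpha>' - \<alpha>)" using d by (metis dvd_diff_commute)
      ultimately show False using d r zdvd_imp_le by fastforce
    qed
    moreover then have "\<beta> = \<beta>'" using e3 b0 by simp
    ultimately show "p = q" using pp qq by simp
  qed
  have eq: "isolated_gaps (gen2 a b) = f ` Box"
  proof
    show "f ` Box \<subseteq> isolated_gaps (gen2 a b)" using K unfolding f_def by auto
  next
    show "isolated_gaps (gen2 a b) \<subseteq> f ` Box"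
    proof
      fix x assume "x \<in> isolated_gaps (gen2 a b)"
      hence xS: "x \<notin> gen2 a b" and x1: "x \<ge> 1" and xm: "x - 1 \<in> gen2 a b" and xp: "x + 1 \<in> gen2 a b"
        unfolding isolated_gaps_def gaps_def by auto
      obtain \<alpha> \<beta> where r: "0 \<le> \<alpha>" "\<alpha> < int b" and xr: "int x = \<alpha> * int a + \<beta> * int b"
        using rep[OF sol b0, of "int x"] by blast
      have bneg: "\<beta> < 0" using memS_iff[OF cp r xr b0 a0] xS by simp
      have im: "int (x - 1) = int x - 1" and ip: "int (x + 1) = int x + 1" using x1 by auto
      have "(\<alpha>, \<beta>) \<in> Box"
        using signs
      proof
        assume s: "u > 0 \<and> v < 0"
        have A1: "\<alpha> + u \<ge> int b"
        proof (rule ccontr)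
          assume "\<not> ?thesis"
          hence "0 \<le> \<alpha> + u" "\<alpha> + u < int b" using r s by auto
          moreover have "int (x + 1) = (\<alpha> + u) * int a + (\<beta> + v) * int b"
            using ip xr sol by (simp add: algebra_simps)
          ultimately have "\<beta> + v \<ge> 0" using memS_iff[OF cp _ _ _ b0 a0] xp by blast
          thus False using bneg s by simp
        qed
        have A2: "\<alpha> \<ge> u"
        proof (rule ccontr)
          assume "\<not> ?thesis"
          hence "0 \<le> \<alpha> - u + int b" "\<alpha> - u + int b < int b" using r s ub by auto
          moreover have "int (x - 1) = (\<alpha> - u + int b) * int a + (\<beta> - v - int a) * int b"
            using im xr sol by (simp add: algebra_simps)
          ultimately have "\<beta> - v - int a \<ge> 0" using memS_iff[OF cp _ _ _ b0 a0] xm by blast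
          thus False using bneg s vb by simp
        qed
        have "0 \<le> \<alpha> - u" "\<alpha> - u < int b" using r s A2 by auto
        moreover have "int (x - 1) = (\<alpha> - u) * int a + (\<beta> - v) * int b"
          using im xr sol by (simp add: algebra_simps)
        ultimately have "\<beta> - v \<ge> 0" using memS_iff[OF cp _ _ _ b0 a0] xm by blast
        thus ?thesis using A1 r bneg s unfolding Box_def by auto
      next
        assume s: "u < 0 \<and> v > 0"
        have A1: "\<alpha> + u \<ge> 0"
        proof (rule ccontr)
          assume "\<not> ?thesis"
          hence "0 \<le> \<alpha> + u + int b" "\<alpha> + u + int b < int b" using r s ub by auto
          moreover have "int (x + 1) = (\<alpha> + u + int b) * int a + (\<beta> + v - int a) * int b"
            using ip xr sol by (simp add: algebra_simps)
          ultimately have "\<beta> + v - int a \<ge> 0" using memS_iff[OF cp _ _ _ b0 a0] xp by blast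
          thus False using bneg s vb by simp
        qed
        have "0 \<le> \<alpha> + u" "\<alpha> + u < int b" using r s A1 by auto
        moreover have "int (x + 1) = (\<alpha> + u) * int a + (\<beta> + v) * int b"
          using ip xr sol by (simp add: algebra_simps)
        ultimately have A3: "\<beta> + v \<ge> 0" using memS_iff[OF cp _ _ _ b0 a0] xp by blast
        have A2: "\<alpha> - u \<ge> int b"
        proof (rule ccontr)
          assume "\<not> ?thesis"
          hence "0 \<le> \<alpha> - u" "\<alpha> - u < int b" using r s by auto
          moreover have "int (x - 1) = (\<alpha> - u) * int a + (\<beta> - v) * int b"
            using im xr sol by (simp add: algebra_simps)
          ultimately have "\<beta> - v \<ge> 0" using memS_iff[OF cp _ _ _ b0 a0] xm by blast
          thus False using bneg s by simp
        qed
        thus ?thesis using A3 r bneg s unfolding Box_def by auto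
      qed
      moreover have "x = f (\<alpha>, \<beta>)" using xr unfolding f_def by simp
      ultimately show "x \<in> f ` Box" by blast
    qed
  qed
  have "card (isolated_gaps (gen2 a b)) = card Box" using eq inj card_image by metis
  also have "\<dots> = nat \<bar>u\<bar> * nat \<bar>v\<bar>" unfolding Box_def
    by (simp add: card_cartesian_product)
  also have "\<dots> = nat \<bar>u * v\<bar>" by (simp add: abs_mult nat_mult_distrib)
  finally show ?thesis .
qed

end
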